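(* Let $n\ge2$, $\lambda\in(-1,1)$, let $g$ be $\mathscr{R}$-admissible and $G$ be $\mathscr{G}$-admissible. There exists a constant $c=c(n,\lambda,g,G)$ such that $$\mathscr{R}(B^\lambda(m))\le c\,m,\qquad \mathscr{G}(B^\lambda(m))\le c\,m$$ for every $0<m\le|B^\lambda|$.
   Context: $|\cdot|$ is Lebesgue measure. $B^\lambda:=\{x\in B_1(0): x_n>\lambda\}$ and, for $m>0$, $B^\lambda(m):=\frac{m^{1/n}}{|B^\lambda|^{1/n}}(B^\lambda-\lambda e_n)$ (a truncated ball of volume $m$ lying in $\{x_n>0\}$). $\mathscr{R}(E):=\int_E\int_Eg(y-x)\,dy\,dx$, $\mathscr{G}(E):=\int_EG(x_n)\,dx$. $g:\mathbb{R}^n\setminus\{0\}\to(0,\infty)$ is $\mathscr{R}$-admissible if $\mathscr{R}(B_1)<\infty$, $B_1$ the unit ball at $0$. $G:(0,\infty)\to(0,\infty)$ is $\mathscr{G}$-admissible if $\sup_{t\in(0,2)}G(t)<\infty$ and $G(\alpha t)\le\alpha^nG(t)$ for all $\alpha>1,t>0$. *)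

theory Defs
  imports "HOL-Analysis.Analysis"
begin

text \<open>Points of R^n are vectors of type real^'n; the index k plays the role of the
 distinguished n-th coordinate (x_n), and axis k 1 is e_n.\<close>

definition trunc_ball :: "'n::finite \<Rightarrow> real \<Rightarrow> (real^'n) set" where
  "trunc_ball k lam = {x \<in> ball 0 1. x $ k > lam}"

definition trunc_ball_m :: "'n::finite \<Rightarrow> real \<Rightarrow> real \<Rightarrow> (real^'n) set" where
  "trunc_ball_m k lam m =
     (\<lambda>x. ((m / measure lebesgue (trunc_ball k lam)) powr (1 / real CARD('n)))
            *\<^sub>R (x - lam *\<^sub>R axis k 1)) ` trunc_ball k lam"

definition Rfun :: "(real^'n::finite \<Rightarrow> real) \<Rightarrow> (real^'n) set \<Rightarrow> ennreal" where
  "Rfun g E = (\<integral>\<^sup>+ x\<in>E. (\<integral>\<^sup>+ y\<in>E. ennreal (g (y - x)) \<partial>lebesgue) \<partial>lebesgue)"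

definition Gfun :: "'n::finite \<Rightarrow> (real \<Rightarrow> real) \<Rightarrow> (real^'n) set \<Rightarrow> ennreal" where
  "Gfun k G E = (\<integral>\<^sup>+ x\<in>E. ennreal (G (x $ k)) \<partial>lebesgue)"

definition R_admissible :: "(real^'n::finite \<Rightarrow> real) \<Rightarrow> bool" where
  "R_admissible g \<longleftrightarrow> g \<in> borel_measurable lebesgue \<and> (\<forall>x. x \<noteq> 0 \<longrightarrow> g x > 0)
     \<and> Rfun g (ball 0 1) < \<infinity>"

definition G_admissible :: "nat \<Rightarrow> (real \<Rightarrow> real) \<Rightarrow> bool" where
  "G_admissible n G \<longleftrightarrow> set_borel_measurable borel {0<..} G \<and> (\<forall>t>0. G t > 0)
     \<and> bdd_above (G ` {0<..<2})
     \<and> (\<forall>\<alpha> t. \<alpha> > 1 \<longrightarrow> t > 0 \<longrightarrow> G (\<alpha> * t) \<le> \<alpha> ^ n * G t)"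

end

theory Submission imports Defs begin

lemma lebesgue_transl:
  fixes t :: "'a::euclidean_space"
  shows "distr lebesgue lebesgue (\<lambda>x. t + x) = lebesgue"
    and "(\<lambda>x. t + x) \<in> lebesgue \<rightarrow>\<^sub>M lebesgue"
proof -
  have e: "(\<lambda>x. t + (\<Sum>j\<in>Basis. ((\<lambda>_. 1::real) j * (x \<bullet> j)) *\<^sub>R j)) = (\<lambda>x. t + x)"
    by (simp add: euclidean_representation)
  show "(\<lambda>x. t + x) \<in> lebesgue \<rightarrow>\<^sub>M lebesgue"
    using lebesgue_affine_measurable[of "\<lambda>_. 1" t] e by simp
  have "lebesgue = density (distr lebesgue lebesgue (\<lambda>x. t + x)) (\<lambda>_. 1)"
    using lebesgue_affine_euclidean[of "\<lambda>_. 1" t] e by simp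
  then show "distr lebesgue lebesgue (\<lambda>x. t + x) = lebesgue"
    by (simp add: density_1)
qed

lemma nn_transl_meas:
  fixes t :: "'a::euclidean_space" and f :: "'a \<Rightarrow> ennreal"
  assumes "f \<in> borel_measurable lebesgue"
  shows "(\<integral>\<^sup>+x. f (t + x) \<partial>lebesgue) = (\<integral>\<^sup>+x. f x \<partial>lebesgue)"
proof -
  have "(\<integral>\<^sup>+x. f x \<partial>lebesgue) = (\<integral>\<^sup>+x. f x \<partial>distr lebesgue lebesgue (\<lambda>x. t + x))"
    using lebesgue_transl(1)[of t] by simp
  also have "\<dots> = (\<integral>\<^sup>+x. f (t + x) \<partial>lebesgue)"
    by (rule nn_integral_distr[OF lebesgue_transl(2)]) (use assms in simp)
  finally show ?thesis by simp
qed

lemma nn_transl_le: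
  fixes t :: "'a::euclidean_space" and f :: "'a \<Rightarrow> ennreal"
  shows "(\<integral>\<^sup>+x. f x \<partial>lebesgue) \<le> (\<integral>\<^sup>+x. f (t + x) \<partial>lebesgue)"
  unfolding nn_integral_def
proof (rule SUP_least)
  fix g assume "g \<in> {g. simple_function lebesgue g \<and> g \<le> f}"
  then have g: "simple_function lebesgue g" "g \<le> f" by auto
  have sg: "simple_function lebesgue (\<lambda>x. g (t + x))"
    by (rule simple_function_comp[OF lebesgue_transl(2) g(1)])
  have "integral\<^sup>S lebesgue g = integral\<^sup>N lebesgue g"
    using nn_integral_eq_simple_integral[OF g(1)] by simp
  also have "\<dots> = (\<integral>\<^sup>+x. g (t + x) \<partial>lebesgue)"
    using nn_transl_meas[of g t] borel_measurable_simple_function[OF g(1)] by simp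
  also have "\<dots> = integral\<^sup>S lebesgue (\<lambda>x. g (t + x))"
    using nn_integral_eq_simple_integral[OF sg] by simp
  also have "\<dots> \<le> (SUP h \<in> {h. simple_function lebesgue h \<and> h \<le> (\<lambda>x. f (t + x))}. integral\<^sup>S lebesgue h)"
    by (rule SUP_upper) (use sg g(2) in \<open>auto simp: le_fun_def\<close>)
  finally show "integral\<^sup>S lebesgue g \<le> (SUP h \<in> {h. simple_function lebesgue h \<and> h \<le> (\<lambda>x. f (t + x))}. integral\<^sup>S lebesgue h)" .
qed

lemma nn_transl:
  fixes t :: "'a::euclidean_space" and f :: "'a \<Rightarrow> ennreal"
  shows "(\<integral>\<^sup>+x. f (t + x) \<partial>lebesgue) = (\<integral>\<^sup>+x. f x \<partial>lebesgue)"
  using nn_transl_le[of f t] nn_transl_le[of "\<lambda>x. f (t + x)" "-t"] by simp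


lemma ball_pos: "0 < emeasure lebesgue (ball (0::'a::euclidean_space) (1/2))"
  using content_ball_pos[of "1/2" "0::'a"]
  by (simp add: emeasure_eq_measure2 measure_completion)

lemma K_finite:
  fixes g :: "'a::euclidean_space \<Rightarrow> real"
  assumes fin: "Rfun' < \<infinity>"
    and R1: "Rfun' = (\<integral>\<^sup>+ x\<in>ball 0 1. (\<integral>\<^sup>+ y\<in>ball 0 1. ennreal (g (y - x)) \<partial>lebesgue) \<partial>lebesgue)"
    and gm: "g \<in> borel_measurable lebesgue"
  shows "(\<integral>\<^sup>+ z. ennreal (g z) * indicator (ball 0 (1/2)) z \<partial>lebesgue) < \<infinity>"
proof -
  let ?K = "(\<integral>\<^sup>+ z. ennreal (g z) * indicator (ball 0 (1/2)) z \<partial>lebesgue)"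
  have inner: "?K \<le> (\<integral>\<^sup>+ y\<in>ball 0 1. ennreal (g (y - x)) \<partial>lebesgue)" if x: "x \<in> ball 0 (1/2)" for x
  proof -
    have "?K = (\<integral>\<^sup>+ y. ennreal (g (-x + y)) * indicator (ball 0 (1/2)) (-x + y) \<partial>lebesgue)"
      using nn_transl[of "\<lambda>z. ennreal (g z) * indicator (ball 0 (1/2)) z" "-x"] by simp
    also have "\<dots> \<le> (\<integral>\<^sup>+ y\<in>ball 0 1. ennreal (g (y - x)) \<partial>lebesgue)"
    proof (rule nn_integral_mono)
      fix y
      show "ennreal (g (-x + y)) * indicator (ball 0 (1/2)) (-x + y) \<le> ennreal (g (y - x)) * indicator (ball 0 1) y"
      proof (cases "norm (y - x) < 1/2")
        case True
        then have "norm y < 1" using x norm_triangle_lt[of "y - x" x 1] by (auto simp: dist_norm)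
        then show ?thesis using True by (auto simp: indicator_def dist_norm)
      next
        case False
        then show ?thesis by (auto simp: indicator_def dist_norm norm_minus_commute)
      qed
    qed
    finally show ?thesis .
  qed
  have "?K * emeasure lebesgue (ball (0::'a) (1/2)) = (\<integral>\<^sup>+ x. ?K * indicator (ball (0::'a) (1/2)) x \<partial>lebesgue)"
    by (rule nn_integral_cmult_indicator[symmetric]) simp
  also have "\<dots> \<le> Rfun'"
    unfolding R1
  proof (rule nn_integral_mono)
    fix x
    show "?K * indicator (ball 0 (1/2)) x \<le> (\<integral>\<^sup>+ y\<in>ball 0 1. ennreal (g (y - x)) \<partial>lebesgue) * indicator (ball 0 1) x"
      using inner[of x] by (auto simp: indicator_def)
  qed
  finally have "?K * emeasure lebesgue (ball (0::'a) (1/2)) < \<infinity>" using fin by simp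
  then show ?thesis using ball_pos[where 'a='a]
    by (auto simp: ennreal_mult_less_top)
qed


lemma Rfun_mono:
  assumes "E \<subseteq> F"
  shows "Rfun g E \<le> Rfun g F"
  unfolding Rfun_def
proof (rule nn_integral_mono)
  fix x
  have "(\<integral>\<^sup>+ y\<in>E. ennreal (g (y - x)) \<partial>lebesgue) \<le> (\<integral>\<^sup>+ y\<in>F. ennreal (g (y - x)) \<partial>lebesgue)"
    by (rule nn_integral_mono) (use assms in \<open>auto simp: indicator_def\<close>)
  then show "(\<integral>\<^sup>+ y\<in>E. ennreal (g (y - x)) \<partial>lebesgue) * indicator E x
      \<le> (\<integral>\<^sup>+ y\<in>F. ennreal (g (y - x)) \<partial>lebesgue) * indicator F x"
    using assms by (auto simp: indicator_def)
qed

lemma Rfun_ball_transl: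
  fixes p :: "real^'n::finite"
  shows "Rfun g (ball p 1) = Rfun g (ball 0 1)"
proof -
  define J where "J = (\<lambda>w. \<integral>\<^sup>+ y. ennreal (g (y - w)) * indicator (ball (0::real^'n) 1) y \<partial>lebesgue)"
  have ind: "indicator (ball p 1) (p + y) = (indicator (ball 0 1) y :: ennreal)" for y
    by (simp add: indicator_def dist_norm)
  have inner: "(\<integral>\<^sup>+ y. ennreal (g (y - x)) * indicator (ball p 1) y \<partial>lebesgue) = J (x - p)" for x
  proof -
    have "(\<integral>\<^sup>+ y. ennreal (g (y - x)) * indicator (ball p 1) y \<partial>lebesgue)
        = (\<integral>\<^sup>+ y. ennreal (g (p + y - x)) * indicator (ball p 1) (p + y) \<partial>lebesgue)"
      using nn_transl[of "\<lambda>y. ennreal (g (y - x)) * indicator (ball p 1) y" p] by simp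
    also have "\<dots> = J (x - p)"
      unfolding J_def ind by (simp add: algebra_simps)
    finally show ?thesis .
  qed
  have "Rfun g (ball p 1) = (\<integral>\<^sup>+ x. J (x - p) * indicator (ball p 1) x \<partial>lebesgue)"
    unfolding Rfun_def inner by simp
  also have "\<dots> = (\<integral>\<^sup>+ x. J (p + x - p) * indicator (ball p 1) (p + x) \<partial>lebesgue)"
    using nn_transl[of "\<lambda>x. J (x - p) * indicator (ball p 1) x" p] by simp
  also have "\<dots> = (\<integral>\<^sup>+ x. J x * indicator (ball 0 1) x \<partial>lebesgue)"
    unfolding ind by simp
  also have "\<dots> = Rfun g (ball 0 1)"
    unfolding Rfun_def J_def by simp
  finally show ?thesis .
qed


theorem lemma3p2:
  fixes k :: "'n::finite" and lam :: real
    and g :: "real^'n \<Rightarrow> real" and G :: "real \<Rightarrow> real"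
  assumes "CARD('n) \<ge> 2"
    and "-1 < lam" and "lam < 1"
    and "R_admissible g"
    and "G_admissible CARD('n) G"
  shows "\<exists>c::real. \<forall>m. 0 < m \<and> m \<le> measure lebesgue (trunc_ball k lam) \<longrightarrow>
           Rfun g (trunc_ball_m k lam m) \<le> ennreal (c * m) \<and>
           Gfun k G (trunc_ball_m k lam m) \<le> ennreal (c * m)"
proof -
  let ?n = "CARD('n)"
  define B where "B = trunc_ball k lam"
  define V where "V = measure lebesgue B"
  define R1 where "R1 = Rfun g (ball 0 1)"
  define K where "K = (\<integral>\<^sup>+ z. ennreal (g z) * indicator (ball (0::real^'n) (1/2)) z \<partial>lebesgue)"
  have "bdd_above (G ` {0<..<2})" using assms(5) by (simp add: G_admissible_def)
  then obtain M where M: "\<And>t. 0 < t \<Longrightarrow> t < 2 \<Longrightarrow> G t \<le> M"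
    by (auto simp: bdd_above_def) (meson greaterThanLessThan_iff)
  have gm: "g \<in> borel_measurable lebesgue" and R1fin: "R1 < \<infinity>"
    using assms(4) by (auto simp: R_admissible_def R1_def)
  have Kfin: "K < \<infinity>"
    unfolding K_def by (rule K_finite[OF R1fin _ gm]) (simp add: R1_def Rfun_def)
  define c where "c = enn2real K + enn2real R1 * 4 ^ ?n / V + max M 0"
  have V0: "V \<ge> 0" by (simp add: V_def)
  show ?thesis
  proof (intro exI[of _ c] allI impI)
    fix m assume m: "0 < m \<and> m \<le> measure lebesgue (trunc_ball k lam)"
    then have m0: "0 < m" and mV: "m \<le> V" by (auto simp: V_def B_def)
    have Vpos: "V > 0" using m0 mV by simp
    define s where "s = (m / V) powr (1 / real ?n)"
    have s0: "s > 0" using m0 Vpos by (simp add: s_def)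
    have s1: "s \<le> 1" unfolding s_def using m0 Vpos mV
      by (intro powr_le1) (auto simp: field_simps)
    have sn: "s ^ ?n = m / V"
    proof -
      have "s ^ ?n = s powr real ?n" using s0 by (simp add: powr_realpow)
      also have "\<dots> = m / V" unfolding s_def using m0 Vpos by (simp add: powr_powr)
      finally show ?thesis .
    qed
    define E where "E = trunc_ball_m k lam m"
    have E_eq: "E = (\<lambda>x. s *\<^sub>R x + (-(s * lam)) *\<^sub>R axis k 1) ` B"
      unfolding E_def trunc_ball_m_def s_def V_def B_def
      by (rule image_cong) (auto simp: algebra_simps)
    have Bsets: "B \<in> sets lebesgue" and Bfin: "emeasure lebesgue B = ennreal V"
    proof -
      have "B \<in> lmeasurable" unfolding B_def trunc_ball_def
      proof (rule lmeasurable_open)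
        show "bounded {x \<in> ball (0::real^'n) 1. lam < x $ k}"
          by (rule bounded_subset[of "ball 0 1"]) auto
        have "{x \<in> ball (0::real^'n) 1. lam < x $ k} = ball 0 1 \<inter> {x. lam < x $ k}" by auto
        moreover have "open {x::real^'n. lam < x $ k}"
          by (rule open_Collect_less) (auto intro: continuous_intros)
        ultimately show "open {x \<in> ball (0::real^'n) 1. lam < x $ k}" by auto
      qed
      then show "B \<in> sets lebesgue" "emeasure lebesgue B = ennreal V"
        by (auto simp: V_def emeasure_eq_measure2)
    qed
    have emE: "emeasure lebesgue E = ennreal m"
    proof -
      have "emeasure lebesgue E = ennreal (\<bar>s\<bar> ^ DIM(real^'n)) * emeasure lebesgue B"
        unfolding E_eq by (rule emeasure_lebesgue_affine)
      also have "\<dots> = ennreal (s ^ ?n * V)" using s0 V0 by (simp add: Bfin ennreal_mult)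
      also have "\<dots> = ennreal m" using sn Vpos by simp
      finally show ?thesis .
    qed
    have Esets: "E \<in> sets lebesgue"
    proof (rule ccontr)
      assume "E \<notin> sets lebesgue"
      then have "emeasure lebesgue E = 0" by (rule emeasure_notin_sets)
      then show False using emE m0 by simp
    qed
    define p where "p = (-(s * lam)) *\<^sub>R axis k (1::real)"
    have Emem: "0 < x $ k \<and> x $ k < 2 \<and> norm (x - p) < s" if "x \<in> E" for x
    proof -
      from that obtain y where y: "y \<in> B" and x: "x = s *\<^sub>R y + p"
        unfolding E_eq p_def by auto
      have ny: "norm y < 1" and yk: "y $ k > lam" using y by (auto simp: B_def trunc_ball_def)
      have "y $ k \<le> norm y" using component_le_norm_cart[of y k] by simp
      then have yk1: "y $ k < 1" using ny by simp
      have xk: "x $ k = s * (y $ k - lam)" unfolding x p_def by (simp add: axis_def algebra_simps)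
      have "s * (y $ k - lam) < 1 * 2"
        using s1 s0 yk1 assms(2) yk by (intro mult_le_less_imp_less) auto
      moreover have "0 < s * (y $ k - lam)" using s0 yk by simp
      moreover have "norm (x - p) = s * norm y" using x s0 by simp
      ultimately show ?thesis using xk ny s0 by simp
    qed
    have cm0: "0 \<le> enn2real K * m" "0 \<le> enn2real R1 * 4 ^ ?n / V * m" "0 \<le> max M 0 * m"
      using m0 V0 by auto
    have c_split: "c * m = enn2real K * m + enn2real R1 * 4 ^ ?n / V * m + max M 0 * m"
      by (simp add: c_def algebra_simps)
    have G_part: "Gfun k G E \<le> ennreal (c * m)"
    proof -
      have "Gfun k G E \<le> (\<integral>\<^sup>+ x. ennreal (max M 0) * indicator E x \<partial>lebesgue)"
        unfolding Gfun_def
      proof (rule nn_integral_mono)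
        fix x
        show "ennreal (G (x $ k)) * indicator E x \<le> ennreal (max M 0) * indicator E x"
        proof (cases "x \<in> E")
          case True
          then have "G (x $ k) \<le> max M 0" using Emem[OF True] M by force
          then show ?thesis using True by (simp add: ennreal_leI)
        qed simp
      qed
      also have "\<dots> = ennreal (max M 0) * ennreal m"
        using Esets emE by (simp add: nn_integral_cmult_indicator)
      also have "\<dots> = ennreal (max M 0 * m)" by (rule ennreal_mult[symmetric]) (use m0 in auto)
      also have "\<dots> \<le> ennreal (c * m)" using cm0 c_split by (intro ennreal_leI) linarith
      finally show ?thesis .
    qed
    have R_part: "Rfun g E \<le> ennreal (c * m)"
    proof (cases "s \<le> 1/4")
      case True
      have "Rfun g E \<le> (\<integral>\<^sup>+ x. K * indicator E x \<partial>lebesgue)"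
        unfolding Rfun_def
      proof (rule nn_integral_mono)
        fix x
        show "(\<integral>\<^sup>+ y\<in>E. ennreal (g (y - x)) \<partial>lebesgue) * indicator E x \<le> K * indicator E x"
        proof (cases "x \<in> E")
          case xE: True
          have "(\<integral>\<^sup>+ y\<in>E. ennreal (g (y - x)) \<partial>lebesgue)
               \<le> (\<integral>\<^sup>+ y. ennreal (g (-x + y)) * indicator (ball 0 (1/2)) (-x + y) \<partial>lebesgue)"
          proof (rule nn_integral_mono)
            fix y
            show "ennreal (g (y - x)) * indicator E y \<le> ennreal (g (-x + y)) * indicator (ball 0 (1/2)) (-x + y)"
            proof (cases "y \<in> E")
              case yE: True
              have "norm (y - x) \<le> norm (y - p) + norm (x - p)"
                using norm_triangle_ineq4[of "y - p" "x - p"] by simp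
              also have "\<dots> < s + s" using Emem[OF xE] Emem[OF yE] by simp
              finally have "norm (y - x) < 1/2" using True by simp
              then show ?thesis using yE by (simp add: indicator_def dist_norm norm_minus_commute)
            qed simp
          qed
          also have "\<dots> = K"
            unfolding K_def using nn_transl[of "\<lambda>z. ennreal (g z) * indicator (ball 0 (1/2)) z" "-x"] by simp
          finally show ?thesis using xE by simp
        qed simp
      qed
      also have "\<dots> = K * ennreal m"
        using Esets emE by (simp add: nn_integral_cmult_indicator)
      also have "\<dots> = ennreal (enn2real K * m)"
        using Kfin m0 by (simp add: ennreal_mult ennreal_enn2real_if)
      also have "\<dots> \<le> ennreal (c * m)" using cm0 c_split by (intro ennreal_leI) linarith
      finally show ?thesis .
    next
      case False
      have "Rfun g E \<le> Rfun g (ball p 1)"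
      proof (rule Rfun_mono, rule subsetI)
        fix x assume "x \<in> E"
        then have "norm (x - p) < 1" using Emem s1 by fastforce
        then show "x \<in> ball p 1" by (simp add: dist_norm norm_minus_commute)
      qed
      also have "\<dots> = R1" unfolding R1_def by (rule Rfun_ball_transl)
      also have "\<dots> = ennreal (enn2real R1)" using R1fin by (simp add: ennreal_enn2real_if)
      also have "\<dots> \<le> ennreal (enn2real R1 * 4 ^ ?n / V * m)"
      proof (rule ennreal_leI)
        have "(1/4::real) ^ ?n \<le> s ^ ?n" using False by (intro power_mono) auto
        then have "1 / 4 ^ ?n \<le> m / V" using sn by (simp add: power_divide)
        then have "1 \<le> 4 ^ ?n / V * m" using Vpos by (simp add: field_simps)
        then show "enn2real R1 \<le> enn2real R1 * 4 ^ ?n / V * m"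
          using mult_left_mono[of 1 "4 ^ ?n / V * m" "enn2real R1"] by simp
      qed
      also have "\<dots> \<le> ennreal (c * m)" using cm0 c_split by (intro ennreal_leI) linarith
      finally show ?thesis .
    qed
    show "Rfun g (trunc_ball_m k lam m) \<le> ennreal (c * m) \<and> Gfun k G (trunc_ball_m k lam m) \<le> ennreal (c * m)"
      using G_part R_part by (simp add: E_def)
  qed
qed

end
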